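(* Let $M_t$ be the true model and $M_j$ any model in the class. (i) If $\dim(M_j)<\dim(M_t)$ then $\delta^*(M_t,M_j)>0$. (ii) If $\dim(M_j)=\dim(M_t)$ then $\delta^*(M_t,M_j)=0$ if $M_j=M_t$ and $\delta^*(M_t,M_j)>0$ if $M_j\neq M_t$. (iii) If $\dim(M_j)>\dim(M_t)$ then $\delta^*(M_t,M_j)=0$ if $M_t$ is nested in $M_j$ and $\delta^*(M_t,M_j)>0$ otherwise.
   Context: Normal linear regression with $k$ potential regressors and $n$ observations; a model $M_j$ contains the intercept and a subset of $j$ regressors, and $\dim(M_j)=j$; $M_t$ is nested in $M_j$ if the regressors of $M_t$ are among those of $M_j$. The true model $M_t$ has sampling distribution $N_n(\mathbf{y}\mid\mathbf{X}_{t+1}\boldsymbol\beta_{t+1},\sigma_t^2\mathbf{I}_n)$ with slope vector $\boldsymbol\beta_t$, all of whose regression coefficients are nonzero. Let $\Sigma^{(n)}_{t+j}=\begin{pmatrix}S^{(n)}_{tt}&S^{(n)}_{tj}\\S^{(n)}_{jt}&S^{(n)}_{jj}\end{pmatrix}$ be the (sample) covariance matrix of the joint set of covariates of $M_t$ and $M_j$, with $S^{(n)}_{tt},S^{(n)}_{jj}$ positive definite, let $S^{(n)}_{t\cdot j}=S^{(n)}_{tt}-S^{(n)}_{tj}(S^{(n)}_{jj})^{-1}S^{(n)}_{jt}$ and $S_{t\cdot j}=\lim_n S^{(n)}_{t\cdot j}$; the limiting covariance matrix of covariates is assumed to exist, and for distinct covariates to be positive definite. The pseudo-distance is $\delta_n(M_t,M_j)=\frac{1}{2\sigma_t^2}\boldsymbol\beta_t'S^{(n)}_{t\cdot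 j}\boldsymbol\beta_t$ (equivalently $\frac{1}{2\sigma_t^2}\boldsymbol\beta_t'\frac{\mathbf{X}_t'(\mathbf{I}-\mathbf{H}_j)\mathbf{X}_t}{n}\boldsymbol\beta_t$, $\mathbf{H}_j$ the hat matrix of $M_j$), and $\delta^*(M_t,M_j)=\lim_{n\to\infty}\delta_n(M_t,M_j)$. *)

theory Defs
  imports "Jordan_Normal_Form.DL_Submatrix" "Jordan_Normal_Form.Gauss_Jordan_Elimination"
begin

(* Regressors are indexed 0..<k; a model is the set of indices of its regressors
   (the intercept is implicit).  Covariance matrices of all k covariates are k x k
   matrices; the blocks for a model are extracted with submatrix (increasing index order). *)

definition pos_def_mat :: "real mat \<Rightarrow> nat \<Rightarrow> bool" where
  "pos_def_mat A n \<longleftrightarrow> A \<in> carrier_mat n n \<and> transpose_mat A = A \<and>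
     (\<forall>v \<in> carrier_vec n. v \<noteq> 0\<^sub>v n \<longrightarrow> v \<bullet> (A *\<^sub>v v) > 0)"

definition schur_cov :: "real mat \<Rightarrow> nat set \<Rightarrow> nat set \<Rightarrow> real mat" where
  "schur_cov S T J = submatrix S T T -
      submatrix S T J * the (mat_inverse (submatrix S J J)) * submatrix S J T"

definition pseudo_dist :: "real \<Rightarrow> real vec \<Rightarrow> real mat \<Rightarrow> nat set \<Rightarrow> nat set \<Rightarrow> real" where
  "pseudo_dist sigma2 beta S T J = (1 / (2 * sigma2)) * (beta \<bullet> (schur_cov S T J *\<^sub>v beta))"

end

theory Submission
  imports Defs "Jordan_Normal_Form.Determinant"
begin

definition emb :: "nat \<Rightarrow> nat set \<Rightarrow> real mat" where
  "emb k I = mat k (card I) (\<lambda>(l,i). if l = pick I i then 1 else 0)"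

lemma card_sub_k: "I \<subseteq> {..<k} \<Longrightarrow> {i. i < k \<and> i \<in> I} = I" by auto

lemma emb_carrier: "emb k I \<in> carrier_mat k (card I)" unfolding emb_def by auto

lemma col_emb: "i < card I \<Longrightarrow> col (emb k I) i = unit_vec k (pick I i)"
  unfolding emb_def unit_vec_def by (intro eq_vecI) auto

lemma pick_inj: assumes "i < card I" "j < card I" "pick I i = pick I j" shows "i = j"
  using pick_mono_le[OF assms(1), of j] pick_mono_le[OF assms(2), of i] assms(3)
  by (metis nat_neq_iff)

lemma pick_lt: assumes "I \<subseteq> {..<k}" "i < card I" shows "pick I i < k"
  using pick_in_set_le[OF assms(2)] assms(1) by auto

lemma idx_lt: fixes I :: "nat set" assumes "finite I" "l \<in> I" shows "card {a\<in>I. a < l} < card I"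
proof -
  have "l \<notin> {a\<in>I. a < l}" by simp
  hence "{a\<in>I. a < l} \<noteq> I" using assms(2) by blast
  hence "{a\<in>I. a < l} \<subset> I" by auto
  thus ?thesis using assms by (intro psubset_card_mono) auto
qed

lemma sub_emb: assumes A: "A \<in> carrier_mat k k" and I: "I \<subseteq> {..<k}" and J: "J \<subseteq> {..<k}"
  shows "transpose_mat (emb k I) * A * emb k J = submatrix A I J"
proof (rule eq_matI)
  have cI: "card {i. i < dim_row A \<and> i \<in> I} = card I" "card {i. i < dim_col A \<and> i \<in> J} = card J"
    using A card_sub_k[OF I] card_sub_k[OF J] by auto
  show "dim_row (transpose_mat (emb k I) * A * emb k J) = dim_row (submatrix A I J)"
    "dim_col (transpose_mat (emb k I) * A * emb k J) = dim_col (submatrix A I J)"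
    using cI by (auto simp: emb_def dim_submatrix)
  fix i j assume i: "i < dim_row (submatrix A I J)" and j: "j < dim_col (submatrix A I J)"
  hence i': "i < card I" and j': "j < card J" using cI by (auto simp: dim_submatrix)
  have pI: "pick I i < k" and pJ: "pick J j < k" using pick_lt I J i' j' by auto
  have "(transpose_mat (emb k I) * A * emb k J) $$ (i,j)
      = row (transpose_mat (emb k I) * A) i \<bullet> unit_vec k (pick J j)"
    using i' j' A emb_carrier[of k I] emb_carrier[of k J] by (subst index_mult_mat) (auto simp: col_emb)
  also have "\<dots> = (transpose_mat (emb k I) * A) $$ (i, pick J j)"
    using A pJ i' by (simp add: emb_def)
  also have "\<dots> = unit_vec k (pick I i) \<bullet> col A (pick J j)"
    using A pJ i' emb_carrier[of k I] by (subst index_mult_mat) (auto simp: col_emb[OF i'])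
  also have "\<dots> = A $$ (pick I i, pick J j)"
    using A pJ pI by simp
  finally show "(transpose_mat (emb k I) * A * emb k J) $$ (i,j) = submatrix A I J $$ (i,j)"
    using submatrix_index i' j' cI by (simp add: submatrix_index)
qed

lemma emb_vec: assumes I: "I \<subseteq> {..<k}" and v: "v \<in> carrier_vec (card I)" and l: "l < k"
  shows "(emb k I *\<^sub>v v) $ l = (if l \<in> I then v $ card {a\<in>I. a < l} else 0)"
proof -
  have fin: "finite I" using I finite_subset by blast
  have "(emb k I *\<^sub>v v) $ l = (\<Sum>i<card I. (if l = pick I i then 1 else 0) * v $ i)"
    using l v unfolding emb_def by (auto simp: scalar_prod_def row_def lessThan_atLeast0 intro!: sum.cong)
  also have "\<dots> = (if l \<in> I then v $ card {a\<in>I. a < l} else 0)"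
  proof (cases "l \<in> I")
    case True
    let ?i0 = "card {a\<in>I. a < l}"
    have i0: "?i0 < card I" using idx_lt[OF fin True] .
    have p0: "pick I ?i0 = l" using pick_card_in_set[OF True] .
    have "(\<Sum>i<card I. (if l = pick I i then 1 else 0) * v $ i) = (\<Sum>i<card I. if i = ?i0 then v $ i else 0)"
      using pick_inj[OF i0] p0 by (intro sum.cong) auto
    also have "\<dots> = v $ ?i0" using i0 by simp
    finally show ?thesis using True by simp
  next
    case False
    thus ?thesis using pick_in_set_le by (auto intro!: sum.neutral)
  qed
  finally show ?thesis .
qed

lemma emb_factor: assumes T: "T \<subseteq> J" and J: "J \<subseteq> {..<k}"
  shows "emb k T = emb k J * mat (card J) (card T) (\<lambda>(j,i). if j = card {a\<in>J. a < pick T i} then 1 else 0)"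
    (is "_ = _ * ?P")
proof (rule eq_matI)
  have finJ: "finite J" using J finite_subset by blast
  show "dim_row (emb k T) = dim_row (emb k J * ?P)" "dim_col (emb k T) = dim_col (emb k J * ?P)"
    by (auto simp: emb_def)
  fix l i assume l: "l < dim_row (emb k J * ?P)" and i: "i < dim_col (emb k J * ?P)"
  hence l': "l < k" and i': "i < card T" by (auto simp: emb_def)
  have pT: "pick T i \<in> J" using pick_in_set_le[OF i'] T by auto
  let ?j = "card {a\<in>J. a < pick T i}"
  have j: "?j < card J" using idx_lt[OF finJ pT] .
  have pj: "pick J ?j = pick T i" using pick_card_in_set[OF pT] .
  have colP: "col ?P i = unit_vec (card J) ?j" using i' unfolding unit_vec_def by (intro eq_vecI) auto
  have "(emb k J * ?P) $$ (l,i) = row (emb k J) l \<bullet> col ?P i"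
    using l i by (subst index_mult_mat) auto
  also have "\<dots> = emb k J $$ (l, ?j)" using colP j l' emb_carrier[of k J] by simp
  also have "\<dots> = emb k T $$ (l, i)" using pj l' j i' by (simp add: emb_def)
  finally show "emb k T $$ (l, i) = (emb k J * ?P) $$ (l, i)" by simp
qed

lemma quad_factor: fixes X :: "real mat"
  assumes X: "X \<in> carrier_mat a b" and Y: "Y \<in> carrier_mat b c" and M: "M \<in> carrier_mat a a"
  shows "transpose_mat (X*Y) * M * (X*Y) = transpose_mat Y * (transpose_mat X * M * X) * Y"
proof -
  have tX: "transpose_mat X \<in> carrier_mat b a" and tY: "transpose_mat Y \<in> carrier_mat c b" using X Y by auto
  have "transpose_mat (X*Y) * M * (X*Y) = (transpose_mat Y * transpose_mat X) * M * (X*Y)"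
    using transpose_mult[OF X Y] by simp
  also have "\<dots> = transpose_mat Y * (transpose_mat X * M * X) * Y"
    using X Y M tX tY by (simp add: assoc_mult_mat[of _ c b _ a _ a] assoc_mult_mat[of _ c a _ a _ c]
      assoc_mult_mat[of _ c b _ a _ c] assoc_mult_mat[of _ b a _ a _ b] assoc_mult_mat[of _ c b _ b _ c]
      assoc_mult_mat[of _ a a _ b _ c] assoc_mult_mat[of _ b a _ b _ c] assoc_mult_mat[of _ b a _ a _ c])
  finally show ?thesis .
qed

lemma nested_alg: fixes X :: "real mat"
  assumes X: "X \<in> carrier_mat a b" and Y: "Y \<in> carrier_mat b c" and M: "M \<in> carrier_mat a a"
   and Q: "Q \<in> carrier_mat b b" and BQ: "(transpose_mat X * M * X) * Q = 1\<^sub>m b"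
  shows "transpose_mat (X*Y) * M * (X*Y) - transpose_mat (X*Y) * M * X * Q * (transpose_mat X * M * (X*Y))
     = 0\<^sub>m c c"
proof -
  define B where "B = transpose_mat X * M * X"
  have tX: "transpose_mat X \<in> carrier_mat b a" and tY: "transpose_mat Y \<in> carrier_mat c b" using X Y by auto
  have B: "B \<in> carrier_mat b b" unfolding B_def using X M by auto
  have e1: "transpose_mat (X*Y) * M * (X*Y) = transpose_mat Y * B * Y" unfolding B_def by (rule quad_factor[OF X Y M])
  have e2: "transpose_mat (X*Y) * M * X = transpose_mat Y * B"
  proof -
    have "transpose_mat (X*Y) * M * X = (transpose_mat Y * transpose_mat X) * M * X"
      using transpose_mult[OF X Y] by simp
    also have "\<dots> = transpose_mat Y * B" unfolding B_def
      using X Y M tX tY by (simp add: assoc_mult_mat[of _ c b _ a _ a] assoc_mult_mat[of _ c a _ a _ b]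
        assoc_mult_mat[of _ c b _ a _ b] assoc_mult_mat[of _ b a _ a _ b])
    finally show ?thesis .
  qed
  have e3: "transpose_mat X * M * (X*Y) = B * Y" unfolding B_def
    using X Y M tX by (simp add: assoc_mult_mat[of _ b a _ a _ b] assoc_mult_mat[of _ b a _ b _ c]
        assoc_mult_mat[of _ b a _ a _ c] assoc_mult_mat[of _ a a _ b _ c])
  have e4: "transpose_mat Y * B * Q * (B * Y) = transpose_mat Y * B * Y"
  proof -
    have "transpose_mat Y * B * Q * (B * Y) = transpose_mat Y * ((B * Q) * B) * Y"
      using B Q tY Y by (simp add: assoc_mult_mat[of _ c b _ b _ b] assoc_mult_mat[of _ c b _ b _ c]
        assoc_mult_mat[of _ b b _ b _ b] assoc_mult_mat[of _ b b _ b _ c])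
    also have "\<dots> = transpose_mat Y * B * Y" using BQ B unfolding B_def[symmetric] by simp
    finally show ?thesis .
  qed
  show ?thesis unfolding e1 e2 e3 e4 using tY B Y by (intro minus_r_inv_mat) auto
qed

lemma nested_zero: fixes A :: "real mat" assumes A: "A \<in> carrier_mat k k" and T: "T \<subseteq> J" and J: "J \<subseteq> {..<k}"
  and Q: "Q \<in> carrier_mat (card J) (card J)" and AQ: "submatrix A J J * Q = 1\<^sub>m (card J)"
  shows "submatrix A T T - submatrix A T J * Q * submatrix A J T = 0\<^sub>m (card T) (card T)"
proof -
  have Tk: "T \<subseteq> {..<k}" using T J by auto
  define P where "P = mat (card J) (card T) (\<lambda>(j,i). if j = card {a\<in>J. a < pick T i} then 1 else (0::real))"
  have P: "P \<in> carrier_mat (card J) (card T)" unfolding P_def by auto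
  have ET: "emb k T = emb k J * P" unfolding P_def by (rule emb_factor[OF T J])
  show ?thesis
    unfolding sub_emb[OF A Tk Tk, symmetric] sub_emb[OF A Tk J, symmetric] sub_emb[OF A J Tk, symmetric]
    unfolding ET
    by (rule nested_alg[OF emb_carrier P A Q]) (use AQ sub_emb[OF A J J] in simp)
qed


lemma bil: fixes E :: "real mat"
  assumes E: "E \<in> carrier_mat k p" and F: "F \<in> carrier_mat k q" and S: "S \<in> carrier_mat k k"
  and b: "b \<in> carrier_vec p" and c: "c \<in> carrier_vec q"
  shows "(E *\<^sub>v b) \<bullet> (S *\<^sub>v (F *\<^sub>v c)) = b \<bullet> ((transpose_mat E * S * F) *\<^sub>v c)"
proof -
  have tE: "transpose_mat E \<in> carrier_mat p k" using E by auto
  have "(transpose_mat E * S * F) *\<^sub>v c = transpose_mat E *\<^sub>v (S *\<^sub>v (F *\<^sub>v c))"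
    using tE S F c by (simp add: assoc_mult_mat[of _ p k _ k _ q] assoc_mult_mat_vec[OF tE, of "S*F" q c]
       assoc_mult_mat_vec[OF S F c])
  moreover have "(transpose_mat (transpose_mat E) *\<^sub>v b) \<bullet> (S *\<^sub>v (F *\<^sub>v c)) = b \<bullet> (transpose_mat E *\<^sub>v (S *\<^sub>v (F *\<^sub>v c)))"
    by (rule transpose_vec_mult_scalar[OF tE _ b]) (use S F c in auto)
  ultimately show ?thesis by simp
qed

lemma pos_limit: fixes S :: "real mat"
  assumes S: "S \<in> carrier_mat k k" and Spd: "\<forall>v \<in> carrier_vec k. v \<noteq> 0\<^sub>v k \<longrightarrow> v \<bullet> (S *\<^sub>v v) > 0"
  and T: "T \<subseteq> {..<k}" and J: "J \<subseteq> {..<k}" and nT: "\<not> T \<subseteq> J"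
  and b: "b \<in> carrier_vec (card T)" and bnz: "\<forall>i < card T. b $ i \<noteq> 0"
  and Q: "Q \<in> carrier_mat (card J) (card J)" and SQ: "submatrix S J J * Q = 1\<^sub>m (card J)"
  shows "b \<bullet> ((submatrix S T T - submatrix S T J * Q * submatrix S J T) *\<^sub>v b) > 0"
proof -
  define ET where "ET = emb k T"
  define EJ where "EJ = emb k J"
  have ET: "ET \<in> carrier_mat k (card T)" and EJ: "EJ \<in> carrier_mat k (card J)"
    unfolding ET_def EJ_def by (auto intro: emb_carrier)
  define Stt where "Stt = submatrix S T T"
  define Stj where "Stj = submatrix S T J"
  define Sjt where "Sjt = submatrix S J T"
  define Sjj where "Sjj = submatrix S J J"
  have Stt_e: "Stt = transpose_mat ET * S * ET" unfolding Stt_def ET_def by (rule sub_emb[OF S T T, symmetric])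
  have Stj_e: "Stj = transpose_mat ET * S * EJ" unfolding Stj_def ET_def EJ_def by (rule sub_emb[OF S T J, symmetric])
  have Sjt_e: "Sjt = transpose_mat EJ * S * ET" unfolding Sjt_def ET_def EJ_def by (rule sub_emb[OF S J T, symmetric])
  have Sjj_e: "Sjj = transpose_mat EJ * S * EJ" unfolding Sjj_def EJ_def by (rule sub_emb[OF S J J, symmetric])
  have cStt: "Stt \<in> carrier_mat (card T) (card T)" and cStj: "Stj \<in> carrier_mat (card T) (card J)"
    and cSjt: "Sjt \<in> carrier_mat (card J) (card T)" and cSjj: "Sjj \<in> carrier_mat (card J) (card J)"
    unfolding Stt_e Stj_e Sjt_e Sjj_e using ET EJ S by auto
  define y where "y = Q *\<^sub>v (Sjt *\<^sub>v b)"
  have y: "y \<in> carrier_vec (card J)" unfolding y_def using Q cSjt b by auto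
  have Sjjy: "Sjj *\<^sub>v y = Sjt *\<^sub>v b"
  proof -
    have "Sjj *\<^sub>v y = (Sjj * Q) *\<^sub>v (Sjt *\<^sub>v b)" unfolding y_def using cSjj Q cSjt b by simp
    also have "\<dots> = Sjt *\<^sub>v b" using SQ cSjt b unfolding Sjj_def by simp
    finally show ?thesis .
  qed
  define u where "u = ET *\<^sub>v b"
  define v where "v = EJ *\<^sub>v y"
  have u: "u \<in> carrier_vec k" and v: "v \<in> carrier_vec k" unfolding u_def v_def using ET EJ b y by auto
  define w where "w = u - v"
  have w: "w \<in> carrier_vec k" unfolding w_def using u v by auto
  have t1: "u \<bullet> (S *\<^sub>v u) = b \<bullet> (Stt *\<^sub>v b)" unfolding u_def Stt_e by (rule bil[OF ET ET S b b])
  have t2: "u \<bullet> (S *\<^sub>v v) = b \<bullet> (Stj *\<^sub>v y)" unfolding u_def v_def Stj_e by (rule bil[OF ET EJ S b y])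
  have t3: "v \<bullet> (S *\<^sub>v u) = y \<bullet> (Sjt *\<^sub>v b)" unfolding u_def v_def Sjt_e by (rule bil[OF EJ ET S y b])
  have t4: "v \<bullet> (S *\<^sub>v v) = y \<bullet> (Sjj *\<^sub>v y)" unfolding v_def Sjj_e by (rule bil[OF EJ EJ S y y])
  have "w \<bullet> (S *\<^sub>v w) = u \<bullet> (S *\<^sub>v u) - u \<bullet> (S *\<^sub>v v) - (v \<bullet> (S *\<^sub>v u) - v \<bullet> (S *\<^sub>v v))"
    unfolding w_def using u v S
    by (simp add: mult_minus_distrib_mat_vec[OF S u v] minus_scalar_prod_distrib[of _ k]
        scalar_prod_minus_distrib[of _ k])
  also have "\<dots> = b \<bullet> (Stt *\<^sub>v b) - b \<bullet> (Stj *\<^sub>v y)"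
    unfolding t1 t2 t3 t4 Sjjy by simp
  also have "\<dots> = b \<bullet> ((Stt - Stj * Q * Sjt) *\<^sub>v b)"
    using cStt cStj cSjt Q b unfolding y_def
    by (simp add: minus_mult_distrib_mat_vec[of _ "card T" "card T"] scalar_prod_minus_distrib[of _ "card T"]
        assoc_mult_mat[of _ "card T" "card J" _ "card J" _ "card T"]
        assoc_mult_mat_vec[OF cStj, of "Q * Sjt" "card T" b] assoc_mult_mat_vec[OF Q cSjt b])
  finally have eq: "w \<bullet> (S *\<^sub>v w) = b \<bullet> ((Stt - Stj * Q * Sjt) *\<^sub>v b)" .
  obtain x where x: "x \<in> T" "x \<notin> J" using nT by auto
  have xk: "x < k" using x T by auto
  have finT: "finite T" using T finite_subset by blast
  have "w $ x = b $ card {a\<in>T. a < x}"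
    unfolding w_def u_def v_def ET_def EJ_def using xk x b y emb_vec[OF T b xk] emb_vec[OF J y xk]
      emb_carrier[of k T] emb_carrier[of k J] by simp
  hence "w $ x \<noteq> 0" using bnz idx_lt[OF finT x(1)] by simp
  hence "w \<noteq> 0\<^sub>v k" using xk by auto
  hence "w \<bullet> (S *\<^sub>v w) > 0" using Spd w by auto
  thus ?thesis using eq unfolding Stt_def Stj_def Sjt_def by simp
qed

definition mconv :: "(nat \<Rightarrow> real mat) \<Rightarrow> real mat \<Rightarrow> bool" where
  "mconv A B \<longleftrightarrow> (\<forall>x. dim_row (A x) = dim_row B \<and> dim_col (A x) = dim_col B) \<and>
     (\<forall>i<dim_row B. \<forall>j<dim_col B. (\<lambda>x. A x $$ (i,j)) \<longlonglongrightarrow> B $$ (i,j))"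

lemma mconv_mult: assumes A: "mconv A B" and C: "mconv C D" and d: "dim_col B = dim_row D"
  shows "mconv (\<lambda>x. A x * C x) (B * D)"
  unfolding mconv_def
proof (intro conjI)
  show "\<forall>x. dim_row (A x * C x) = dim_row (B * D) \<and> dim_col (A x * C x) = dim_col (B * D)"
    using A C unfolding mconv_def by auto
next
  show "\<forall>i<dim_row (B * D). \<forall>j<dim_col (B * D). (\<lambda>x. (A x * C x) $$ (i, j)) \<longlonglongrightarrow> (B * D) $$ (i, j)"
  proof (intro allI impI)
  fix i j assume i: "i < dim_row (B * D)" and j: "j < dim_col (B * D)"
  have eq: "\<And>x. (A x * C x) $$ (i,j) = (\<Sum>l<dim_col B. A x $$ (i,l) * C x $$ (l,j))"
    using A C d i j unfolding mconv_def
    by (auto simp: scalar_prod_def lessThan_atLeast0 intro!: sum.cong)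
  have eq2: "(B * D) $$ (i,j) = (\<Sum>l<dim_col B. B $$ (i,l) * D $$ (l,j))"
    using d i j by (auto simp: scalar_prod_def lessThan_atLeast0 intro!: sum.cong)
  show "(\<lambda>x. (A x * C x) $$ (i, j)) \<longlonglongrightarrow> (B * D) $$ (i, j)"
    unfolding eq eq2
    using A C d i j unfolding mconv_def by (auto intro!: tendsto_sum tendsto_mult)
  qed
qed

lemma mconv_minus: assumes A: "mconv A B" and C: "mconv C D" and d: "dim_row B = dim_row D" "dim_col B = dim_col D"
  shows "mconv (\<lambda>x. A x - C x) (B - D)"
  using A C d unfolding mconv_def by (auto intro!: tendsto_diff)

lemma mconv_smult: assumes A: "mconv A B" and f: "f \<longlonglongrightarrow> c"
  shows "mconv (\<lambda>x. f x \<cdot>\<^sub>m A x) (c \<cdot>\<^sub>m B)"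
  using A f unfolding mconv_def by (auto intro!: tendsto_mult)

lemma mconv_submatrix: assumes A: "mconv A B" and B: "B \<in> carrier_mat k k"
  and I: "I \<subseteq> {..<k}" and J: "J \<subseteq> {..<k}"
  shows "mconv (\<lambda>x. submatrix (A x) I J) (submatrix B I J)"
proof -
  have cI: "{i. i < k \<and> i \<in> I} = I" "{i. i < k \<and> i \<in> J} = J" using I J by auto
  have dA: "\<And>x. dim_row (A x) = k \<and> dim_col (A x) = k" using A B unfolding mconv_def by auto
  show ?thesis unfolding mconv_def
  proof (intro conjI)
    show "\<forall>x. dim_row (submatrix (A x) I J) = dim_row (submatrix B I J) \<and>
        dim_col (submatrix (A x) I J) = dim_col (submatrix B I J)"
      using dA B by (simp add: dim_submatrix)
  next
    show "\<forall>i<dim_row (submatrix B I J). \<forall>j<dim_col (submatrix B I J). (\<lambda>x. submatrix (A x) I J $$ (i, j)) \<longlonglongrightarrow> submatrix B I J $$ (i, j)"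
    proof (intro allI impI)
    fix i j assume i: "i < dim_row (submatrix B I J)" and j: "j < dim_col (submatrix B I J)"
    hence i': "i < card I" and j': "j < card J" using B cI by (auto simp: dim_submatrix)
    have pI: "pick I i < k" and pJ: "pick J j < k" using pick_in_set_le[OF i'] pick_in_set_le[OF j'] I J by auto
    have e: "\<And>x. submatrix (A x) I J $$ (i,j) = A x $$ (pick I i, pick J j)"
      using dA cI i' j' by (intro submatrix_index) auto
    have e2: "submatrix B I J $$ (i,j) = B $$ (pick I i, pick J j)"
      using B cI i' j' by (intro submatrix_index) auto
    show "(\<lambda>x. submatrix (A x) I J $$ (i, j)) \<longlonglongrightarrow> submatrix B I J $$ (i, j)"
      unfolding e e2 using A B pI pJ unfolding mconv_def by auto
    qed
  qed
qed

lemma mconv_det: assumes A: "mconv A B" and B: "B \<in> carrier_mat n n"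
  shows "(\<lambda>x. det (A x)) \<longlonglongrightarrow> det B"
proof -
  have cA: "\<And>x. A x \<in> carrier_mat n n" using A B unfolding mconv_def carrier_mat_def by auto
  have lim: "\<And>i j. i < n \<Longrightarrow> j < n \<Longrightarrow> (\<lambda>x. A x $$ (i,j)) \<longlonglongrightarrow> B $$ (i,j)"
    using A B unfolding mconv_def by auto
  show ?thesis
    unfolding det_def'[OF cA] det_def'[OF B]
    by (intro tendsto_sum tendsto_mult tendsto_const tendsto_prod lim)
       (auto dest: permutes_in_image)
qed

lemma mconv_delete: assumes A: "mconv A B"
  shows "mconv (\<lambda>x. mat_delete (A x) i j) (mat_delete B i j)"
  using A unfolding mconv_def mat_delete_def by auto

lemma mconv_adj: assumes A: "mconv A B" and B: "B \<in> carrier_mat n n"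
  shows "mconv (\<lambda>x. adj_mat (A x)) (adj_mat B)"
  unfolding mconv_def
proof (intro conjI)
  show "\<forall>x. dim_row (adj_mat (A x)) = dim_row (adj_mat B) \<and> dim_col (adj_mat (A x)) = dim_col (adj_mat B)"
    using A unfolding mconv_def adj_mat_def by auto
next
  show "\<forall>i<dim_row (adj_mat B). \<forall>j<dim_col (adj_mat B). (\<lambda>x. adj_mat (A x) $$ (i, j)) \<longlonglongrightarrow> adj_mat B $$ (i, j)"
  proof (intro allI impI)
  fix i j assume i: "i < dim_row (adj_mat B)" and j: "j < dim_col (adj_mat B)"
  hence i': "i < n" and j': "j < n" using B by (auto simp: adj_mat_def)
  have dA: "\<And>x. dim_row (A x) = n \<and> dim_col (A x) = n" using A B unfolding mconv_def by auto
  have e: "\<And>x. adj_mat (A x) $$ (i,j) = (-1)^(j+i) * det (mat_delete (A x) j i)"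
    using dA i' j' by (simp add: adj_mat_def cofactor_def)
  have e2: "adj_mat B $$ (i,j) = (-1)^(j+i) * det (mat_delete B j i)"
    using B i' j' by (simp add: adj_mat_def cofactor_def)
  have "mconv (\<lambda>x. mat_delete (A x) j i) (mat_delete B j i)" by (rule mconv_delete[OF A])
  moreover have "mat_delete B j i \<in> carrier_mat (n-1) (n-1)" using B by (rule mat_delete_carrier)
  ultimately have "(\<lambda>x. det (mat_delete (A x) j i)) \<longlonglongrightarrow> det (mat_delete B j i)" by (rule mconv_det)
  thus "(\<lambda>x. adj_mat (A x) $$ (i, j)) \<longlonglongrightarrow> adj_mat B $$ (i, j)"
    unfolding e e2 by (intro tendsto_mult tendsto_const)
  qed
qed

lemma inv_adj: fixes A :: "real mat"
  assumes A: "A \<in> carrier_mat n n" and Q: "Q \<in> carrier_mat n n" and AQ: "A * Q = 1\<^sub>m n"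
  and d: "det A \<noteq> 0"
  shows "Q = (1 / det A) \<cdot>\<^sub>m adj_mat A"
proof -
  have adj: "adj_mat A \<in> carrier_mat n n" "adj_mat A * A = det A \<cdot>\<^sub>m 1\<^sub>m n" using adj_mat[OF A] by auto
  have "adj_mat A = adj_mat A * (A * Q)" using AQ adj by simp
  also have "\<dots> = (adj_mat A * A) * Q" by (rule assoc_mult_mat[OF adj(1) A Q, symmetric])
  also have "\<dots> = det A \<cdot>\<^sub>m Q" using adj Q mult_smult_assoc_mat[OF one_carrier_mat[of n] Q, of "det A"] by simp
  finally have "adj_mat A = det A \<cdot>\<^sub>m Q" .
  hence "(1 / det A) \<cdot>\<^sub>m adj_mat A = (1/det A) \<cdot>\<^sub>m (det A \<cdot>\<^sub>m Q)" by simp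
  also have "\<dots> = Q" using d by (intro eq_matI) auto
  finally show ?thesis by simp
qed

lemma mconv_quad: assumes A: "mconv A B" and b: "b \<in> carrier_vec n" and B: "B \<in> carrier_mat n n"
  shows "(\<lambda>x. b \<bullet> (A x *\<^sub>v b)) \<longlonglongrightarrow> b \<bullet> (B *\<^sub>v b)"
proof -
  have dA: "\<And>x. dim_row (A x) = n \<and> dim_col (A x) = n" using A B unfolding mconv_def by auto
  have e: "\<And>M. dim_row M = n \<Longrightarrow> dim_col M = n \<Longrightarrow> b \<bullet> (M *\<^sub>v b) = (\<Sum>i<n. b $ i * (\<Sum>j<n. M $$ (i,j) * b $ j))"
    using b by (auto simp: scalar_prod_def lessThan_atLeast0 row_def intro!: sum.cong)
  have eB: "b \<bullet> (B *\<^sub>v b) = (\<Sum>i<n. b $ i * (\<Sum>j<n. B $$ (i,j) * b $ j))" using B by (intro e) auto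
  show ?thesis unfolding e[OF conjunct1[OF dA] conjunct2[OF dA]] eB using B
    using A unfolding mconv_def by (auto intro!: tendsto_sum tendsto_mult)
qed


lemma pd_det: fixes A :: "real mat" assumes A: "A \<in> carrier_mat n n"
  and pd: "\<forall>v\<in>carrier_vec n. v \<noteq> 0\<^sub>v n \<longrightarrow> v \<bullet> (A *\<^sub>v v) > 0"
  shows "det A \<noteq> 0"
proof
  assume "det A = 0"
  then obtain v where v: "v \<in> carrier_vec n" "v \<noteq> 0\<^sub>v n" "A *\<^sub>v v = 0\<^sub>v n"
    using det_0_iff_vec_prod_zero[OF A] by auto
  thus False using pd by auto
qed

lemma pd_inv: fixes A :: "real mat" assumes A: "A \<in> carrier_mat n n"
  and pd: "\<forall>v\<in>carrier_vec n. v \<noteq> 0\<^sub>v n \<longrightarrow> v \<bullet> (A *\<^sub>v v) > 0"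
  shows "mat_inverse A \<noteq> None \<and> A * the (mat_inverse A) = 1\<^sub>m n \<and> the (mat_inverse A) \<in> carrier_mat n n"
proof -
  have d: "det A \<noteq> 0" by (rule pd_det[OF A pd])
  have U: "A \<in> Units (ring_mat TYPE(real) n ())" by (rule det_non_zero_imp_unit[OF A d])
  have nN: "mat_inverse A \<noteq> None" using mat_inverse(1)[OF A, of "()"] U by auto
  then obtain Q where Q: "mat_inverse A = Some Q" by auto
  from mat_inverse(2)[OF A Q] nN Q show ?thesis by auto
qed

lemma sub_pd: fixes S :: "real mat" assumes S: "S \<in> carrier_mat k k"
  and pd: "\<forall>v\<in>carrier_vec k. v \<noteq> 0\<^sub>v k \<longrightarrow> v \<bullet> (S *\<^sub>v v) > 0"
  and J: "J \<subseteq> {..<k}"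
  shows "\<forall>v\<in>carrier_vec (card J). v \<noteq> 0\<^sub>v (card J) \<longrightarrow> v \<bullet> (submatrix S J J *\<^sub>v v) > 0"
proof (intro ballI impI)
  fix v :: "real vec" assume v: "v \<in> carrier_vec (card J)" and nz: "v \<noteq> 0\<^sub>v (card J)"
  then obtain i where i: "i < card J" "v $ i \<noteq> 0" by (metis carrier_vecD eq_vecI index_zero_vec(1,2))
  have pk: "pick J i < k" using pick_in_set_le[OF i(1)] J by auto
  have "(emb k J *\<^sub>v v) $ pick J i = v $ i"
    using emb_vec[OF J v pk] pick_in_set_le[OF i(1)] card_pick_le[OF i(1)] by simp
  hence "emb k J *\<^sub>v v \<noteq> 0\<^sub>v k" using i pk by auto
  moreover have "emb k J *\<^sub>v v \<in> carrier_vec k" using emb_carrier[of k J] v by auto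
  ultimately have "(emb k J *\<^sub>v v) \<bullet> (S *\<^sub>v (emb k J *\<^sub>v v)) > 0" using pd by auto
  thus "v \<bullet> (submatrix S J J *\<^sub>v v) > 0"
    using bil[OF emb_carrier emb_carrier S v v] sub_emb[OF S J J] by simp
qed

theorem lemma3:
  fixes k :: nat and T J :: "nat set" and beta :: "real vec" and sigma2 :: real
    and Sn :: "nat \<Rightarrow> real mat" and S :: "real mat"
  assumes T_sub: "T \<subseteq> {..<k}" and J_sub: "J \<subseteq> {..<k}"
    and beta_dim: "beta \<in> carrier_vec (card T)"
    and beta_nz: "\<forall>i < card T. beta $ i \<noteq> 0"
    and sigma_pos: "sigma2 > 0"
    and Sn_dim: "\<forall>n. Sn n \<in> carrier_mat k k"
    and Stt_pd: "\<forall>n. pos_def_mat (submatrix (Sn n) T T) (card T)"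
    and Sjj_pd: "\<forall>n. pos_def_mat (submatrix (Sn n) J J) (card J)"
    and S_lim: "\<forall>i < k. \<forall>j < k. (\<lambda>n. Sn n $$ (i, j)) \<longlonglongrightarrow> S $$ (i, j)"
    and S_pd: "pos_def_mat S k"
  shows "(card J < card T \<longrightarrow>
            (\<exists>d > 0. (\<lambda>n. pseudo_dist sigma2 beta (Sn n) T J) \<longlonglongrightarrow> d))
       \<and> (card J = card T \<longrightarrow>
            (J = T \<longrightarrow> (\<lambda>n. pseudo_dist sigma2 beta (Sn n) T J) \<longlonglongrightarrow> 0)
          \<and> (J \<noteq> T \<longrightarrow> (\<exists>d > 0. (\<lambda>n. pseudo_dist sigma2 beta (Sn n) T J) \<longlonglongrightarrow> d)))
       \<and> (card J > card T \<longrightarrow>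
            (T \<subseteq> J \<longrightarrow> (\<lambda>n. pseudo_dist sigma2 beta (Sn n) T J) \<longlonglongrightarrow> 0)
          \<and> (\<not> T \<subseteq> J \<longrightarrow> (\<exists>d > 0. (\<lambda>n. pseudo_dist sigma2 beta (Sn n) T J) \<longlonglongrightarrow> d)))"
  proof -
  have Sk: "S \<in> carrier_mat k k" and Spd: "\<forall>v\<in>carrier_vec k. v \<noteq> 0\<^sub>v k \<longrightarrow> v \<bullet> (S *\<^sub>v v) > 0"
    using S_pd unfolding pos_def_mat_def by auto
  have finT: "finite T" using T_sub finite_subset by blast
  have finJ: "finite J" using J_sub finite_subset by blast
  have cJ: "\<And>n. submatrix (Sn n) J J \<in> carrier_mat (card J) (card J)"
    and pdJ: "\<And>n. \<forall>v\<in>carrier_vec (card J). v \<noteq> 0\<^sub>v (card J) \<longrightarrow> v \<bullet> (submatrix (Sn n) J J *\<^sub>v v) > 0"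
    using Sjj_pd unfolding pos_def_mat_def by auto
  have invn: "\<And>n. submatrix (Sn n) J J * the (mat_inverse (submatrix (Sn n) J J)) = 1\<^sub>m (card J)
       \<and> the (mat_inverse (submatrix (Sn n) J J)) \<in> carrier_mat (card J) (card J)"
    using pd_inv[OF cJ pdJ] by blast
  have nested: "(\<lambda>n. pseudo_dist sigma2 beta (Sn n) T J) \<longlonglongrightarrow> 0" if TJ: "T \<subseteq> J"
  proof -
    have "pseudo_dist sigma2 beta (Sn n) T J = 0" for n
    proof -
      have "schur_cov (Sn n) T J = 0\<^sub>m (card T) (card T)"
        unfolding schur_cov_def
        using nested_zero[OF _ TJ J_sub, of "Sn n" "the (mat_inverse (submatrix (Sn n) J J))"] Sn_dim invn
        by blast
      moreover have "0\<^sub>m (card T) (card T) *\<^sub>v beta = 0\<^sub>v (card T)"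
        using beta_dim by (intro eq_vecI) (auto simp: scalar_prod_def)
      ultimately show ?thesis unfolding pseudo_dist_def using beta_dim by simp
    qed
    thus ?thesis by simp
  qed
  have nonnested: "\<exists>d>0. (\<lambda>n. pseudo_dist sigma2 beta (Sn n) T J) \<longlonglongrightarrow> d" if nTJ: "\<not> T \<subseteq> J"
  proof -
    have SJk: "submatrix S J J \<in> carrier_mat (card J) (card J)"
      using Sk card_sub_k[OF J_sub] unfolding carrier_mat_def by (simp add: dim_submatrix)
    have pdSJ: "\<forall>v\<in>carrier_vec (card J). v \<noteq> 0\<^sub>v (card J) \<longrightarrow> v \<bullet> (submatrix S J J *\<^sub>v v) > 0"
      by (rule sub_pd[OF Sk Spd J_sub])
    define Q where "Q = the (mat_inverse (submatrix S J J))"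
    have Q: "submatrix S J J * Q = 1\<^sub>m (card J)" "Q \<in> carrier_mat (card J) (card J)"
      unfolding Q_def using pd_inv[OF SJk pdSJ] by auto
    have dSJ: "det (submatrix S J J) \<noteq> 0" by (rule pd_det[OF SJk pdSJ])
    have dn: "det (submatrix (Sn n) J J) \<noteq> 0" for n by (rule pd_det[OF cJ pdJ])
    have mS: "mconv Sn S" unfolding mconv_def using Sn_dim Sk S_lim by auto
    have mJJ: "mconv (\<lambda>n. submatrix (Sn n) J J) (submatrix S J J)" by (rule mconv_submatrix[OF mS Sk J_sub J_sub])
    have mTT: "mconv (\<lambda>n. submatrix (Sn n) T T) (submatrix S T T)" by (rule mconv_submatrix[OF mS Sk T_sub T_sub])
    have mTJ: "mconv (\<lambda>n. submatrix (Sn n) T J) (submatrix S T J)" by (rule mconv_submatrix[OF mS Sk T_sub J_sub])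
    have mJT: "mconv (\<lambda>n. submatrix (Sn n) J T) (submatrix S J T)" by (rule mconv_submatrix[OF mS Sk J_sub T_sub])
    have Qeq: "Q = (1 / det (submatrix S J J)) \<cdot>\<^sub>m adj_mat (submatrix S J J)"
      by (rule inv_adj[OF SJk Q(2) Q(1) dSJ])
    have Qneq: "the (mat_inverse (submatrix (Sn n) J J)) = (1 / det (submatrix (Sn n) J J)) \<cdot>\<^sub>m adj_mat (submatrix (Sn n) J J)" for n
      using invn[of n] by (intro inv_adj[OF cJ _ _ dn]) auto
    have mQ: "mconv (\<lambda>n. the (mat_inverse (submatrix (Sn n) J J))) Q"
      unfolding Qneq Qeq
      by (intro mconv_smult mconv_adj[OF mJJ SJk] tendsto_divide tendsto_const mconv_det[OF mJJ SJk] dSJ)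
    have dims: "dim_row (submatrix S T T) = card T" "dim_col (submatrix S T T) = card T"
      "dim_row (submatrix S T J) = card T" "dim_col (submatrix S T J) = card J"
      "dim_row (submatrix S J T) = card J" "dim_col (submatrix S J T) = card T"
      using Sk card_sub_k[OF J_sub] card_sub_k[OF T_sub] unfolding carrier_mat_def by (simp_all add: dim_submatrix)
    have mSchur: "mconv (\<lambda>n. schur_cov (Sn n) T J) (schur_cov S T J)"
      unfolding schur_cov_def Q_def[symmetric]
      by (intro mconv_minus mconv_mult mTT mTJ mJT mQ) (use dims Q(2) in auto)
    have cSchur: "schur_cov S T J \<in> carrier_mat (card T) (card T)"
      unfolding schur_cov_def Q_def[symmetric] using dims Q(2) by auto
    have lim: "(\<lambda>n. pseudo_dist sigma2 beta (Sn n) T J) \<longlonglongrightarrow> pseudo_dist sigma2 beta S T J"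
      unfolding pseudo_dist_def
      by (intro tendsto_mult tendsto_const mconv_quad[OF mSchur beta_dim cSchur])
    have "beta \<bullet> (schur_cov S T J *\<^sub>v beta) > 0"
      unfolding schur_cov_def Q_def[symmetric]
      by (rule pos_limit[OF Sk Spd T_sub J_sub nTJ beta_dim beta_nz Q(2) Q(1)])
    hence "pseudo_dist sigma2 beta S T J > 0" unfolding pseudo_dist_def using sigma_pos by simp
    thus ?thesis using lim by blast
  qed
  have c1: "\<not> T \<subseteq> J" if "card J < card T"
  proof
    assume "T \<subseteq> J"
    hence "card T \<le> card J" by (rule card_mono[OF finJ])
    thus False using that by simp
  qed
  have c2: "\<not> T \<subseteq> J" if "card J = card T" "J \<noteq> T"
  proof
    assume "T \<subseteq> J"
    hence "T = J" by (rule card_subset_eq[OF finJ]) (use that in simp)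
    thus False using that by simp
  qed
  show ?thesis using nested nonnested c1 c2 by auto
qed

end
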